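(* Let $d\ge404$ and $k$ an integer with $d/2+1<k\le2d/3$. Then for every $x\in(1,2]$ such that $f(x)\le k/(2k-d)^2$, $$\frac{(x+1)f'(x)}{k}<\big(1+\eta(x)\big)f(x).$$
   Context: $f(x)=\binom dk^{-1}\sum_{i=0}^{d-k}\binom ki\binom{d-k}{i}x^{k-i}$ and $\eta(x)=\dfrac{2k-d}{d-k+\sqrt{(d-k)^2+d(2k-d)f(x)}}$. *)

theory Defs
  imports "HOL-Analysis.Analysis"
begin

definition f18 :: "nat \<Rightarrow> nat \<Rightarrow> real \<Rightarrow> real" where
  "f18 d k x = (\<Sum>i=0..d-k. real (k choose i) * real ((d-k) choose i) * x ^ (k-i)) / real (d choose k)"

definition eta18 :: "nat \<Rightarrow> nat \<Rightarrow> real \<Rightarrow> real" where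
  "eta18 d k x = (2 * real k - real d) /
     (real d - real k + sqrt ((real d - real k)^2 + real d * (2 * real k - real d) * f18 d k x))"

end

theory Submission
  imports Defs
begin

lemma choose_swap: "(k choose i) * ((k - i) choose j) = (k choose j) * ((k - j) choose i)"
proof (cases "i + j \<le> k")
  case True
  have 1: "(k choose (i+j)) * ((i+j) choose i) = (k choose i) * ((k - i) choose j)"
    using choose_mult[of i "i+j" k] True by simp
  have 2: "(k choose (i+j)) * ((i+j) choose j) = (k choose j) * ((k - j) choose i)"
    using choose_mult[of j "i+j" k] True by simp
  have 3: "((i+j) choose i) = ((i+j) choose j)"
    using binomial_symmetric[of i "i+j"] by simp
  show ?thesis using 1 2 3 by simp
next
  case False
  consider "k < i" | "k < j" | "i \<le> k" "j \<le> k" by linarith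
  then show ?thesis
  proof cases
    case 1
    then have "k - j < i" by arith
    then show ?thesis using 1 by (simp add: binomial_eq_0)
  next
    case 2
    then have "k - i < j" by arith
    then show ?thesis using 2 by (simp add: binomial_eq_0)
  next
    case 3
    have "k - i < j" using False 3 by arith
    moreover have "k - j < i" using False 3 by arith
    ultimately show ?thesis by (simp add: binomial_eq_0)
  qed
qed

lemma inner_id:
  assumes "j \<le> k" "k \<le> d"
  shows "(\<Sum>i=0..d-k. (k choose i) * ((d-k) choose i) * ((k-i) choose j)) = (k choose j) * ((d-j) choose (d-k))"
proof -
  have "(\<Sum>i=0..d-k. (k choose i) * ((d-k) choose i) * ((k-i) choose j))
      = (\<Sum>i\<le>d-k. (k choose j) * (((k-j) choose i) * ((d-k) choose ((d-k) - i))))"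
  proof (unfold atLeast0AtMost, rule sum.cong[OF refl])
    fix i assume "i \<in> {..d-k}"
    then have "((d-k) choose ((d-k) - i)) = ((d-k) choose i)"
      using binomial_symmetric[of i "d-k"] by simp
    then show "(k choose i) * ((d-k) choose i) * ((k-i) choose j) = (k choose j) * (((k-j) choose i) * ((d-k) choose ((d-k) - i)))"
      using choose_swap[of k i j] by (metis mult.commute mult.left_commute)
  qed
  also have "\<dots> = (k choose j) * (\<Sum>i\<le>d-k. ((k-j) choose i) * ((d-k) choose ((d-k) - i)))"
    by (simp add: sum_distrib_left)
  also have "\<dots> = (k choose j) * ((k - j + (d-k)) choose (d-k))"
    by (subst vandermonde) (rule refl)
  also have "k - j + (d-k) = d - j" using assms by simp
  finally show ?thesis .
qed

definition ac :: "nat \<Rightarrow> nat \<Rightarrow> nat \<Rightarrow> real" where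
  "ac d k j = real (k choose j) * real ((d-j) choose (d-k)) / real (d choose k)"

lemma pow_expand:
  fixes x :: real assumes "i \<le> k"
  shows "x^(k-i) = (\<Sum>j=0..k. real ((k-i) choose j) * (x-1)^j)"
proof -
  have "x^(k-i) = ((x-1)+1)^(k-i)" by simp
  also have "\<dots> = (\<Sum>j\<le>k-i. real ((k-i) choose j) * (x-1)^j)"
    by (subst binomial_ring) simp
  also have "\<dots> = (\<Sum>j=0..k. real ((k-i) choose j) * (x-1)^j)"
    by (rule sum.mono_neutral_left) (auto simp: binomial_eq_0)
  finally show ?thesis .
qed

lemma f18_expand:
  assumes "k \<le> d"
  shows "f18 d k x = (\<Sum>j=0..k. ac d k j * (x-1)^j)"
proof -
  have "(\<Sum>i=0..d-k. real (k choose i) * real ((d-k) choose i) * x ^ (k-i))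
      = (\<Sum>i=0..d-k. \<Sum>j=0..k. real (k choose i) * real ((d-k) choose i) * real ((k-i) choose j) * (x-1)^j)"
  proof (rule sum.cong[OF refl])
    fix i assume i: "i \<in> {0..d-k}"
    show "real (k choose i) * real ((d-k) choose i) * x ^ (k-i) = (\<Sum>j=0..k. real (k choose i) * real ((d-k) choose i) * real ((k-i) choose j) * (x-1)^j)"
    proof (cases "i \<le> k")
      case True
      show ?thesis by (subst pow_expand[OF True]) (simp add: sum_distrib_left mult.assoc)
    next
      case False
      then show ?thesis by (simp add: binomial_eq_0)
    qed
  qed
  also have "\<dots> = (\<Sum>j=0..k. \<Sum>i=0..d-k. real (k choose i) * real ((d-k) choose i) * real ((k-i) choose j) * (x-1)^j)"
    by (rule sum.swap)
  also have "\<dots> = (\<Sum>j=0..k. real ((k choose j) * ((d-j) choose (d-k))) * (x-1)^j)"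
  proof (rule sum.cong[OF refl])
    fix j assume j: "j \<in> {0..k}"
    have "(\<Sum>i=0..d-k. real (k choose i) * real ((d-k) choose i) * real ((k-i) choose j) * (x-1)^j)
       = real (\<Sum>i=0..d-k. (k choose i) * ((d-k) choose i) * ((k-i) choose j)) * (x-1)^j"
      by (simp add: sum_distrib_right)
    also have "\<dots> = real ((k choose j) * ((d-j) choose (d-k))) * (x-1)^j"
      using inner_id[of j k d] j assms by simp
    finally show "(\<Sum>i=0..d-k. real (k choose i) * real ((d-k) choose i) * real ((k-i) choose j) * (x-1)^j) = real ((k choose j) * ((d-j) choose (d-k))) * (x-1)^j" .
  qed
  finally show ?thesis
    unfolding f18_def ac_def by (simp add: sum_divide_distrib)
qed

lemma ac_ratio:
  assumes "j \<le> k" "k \<le> d"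
  shows "real (Suc j) * ac d k (Suc j) * (real d - real j) = ac d k j * (real k - real j)^2"
proof -
  have 1: "Suc j * (k choose Suc j) = (k - j) * (k choose j)"
    using binomial_absorption[of j k] binomial_absorb_comp[of k j] by simp
  have 2: "(d - j) * ((d - Suc j) choose (d-k)) = (k - j) * ((d-j) choose (d-k))"
    using binomial_absorb_comp[of "d-j" "d-k"] assms by (simp add: diff_diff_add)
  have e1: "real (Suc j) * real (k choose Suc j) = (real k - real j) * real (k choose j)"
  proof -
    have "real (Suc j * (k choose Suc j)) = real ((k - j) * (k choose j))" by (simp only: 1)
    then show ?thesis using assms by (simp only: of_nat_mult of_nat_diff)
  qed
  have e2: "(real d - real j) * real ((d - Suc j) choose (d-k)) = (real k - real j) * real ((d-j) choose (d-k))"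
  proof -
    have "real ((d - j) * ((d - Suc j) choose (d-k))) = real ((k - j) * ((d-j) choose (d-k)))" by (simp only: 2)
    then show ?thesis using assms by (simp only: of_nat_mult of_nat_diff)
  qed
  have "real (Suc j) * ac d k (Suc j) * (real d - real j)
      = (real (Suc j) * real (k choose Suc j)) * ((real d - real j) * real ((d - Suc j) choose (d-k))) / real (d choose k)"
    unfolding ac_def by simp
  also have "\<dots> = ((real k - real j) * real (k choose j)) * ((real k - real j) * real ((d-j) choose (d-k))) / real (d choose k)"
    by (simp only: e1 e2)
  also have "\<dots> = ac d k j * (real k - real j)^2"
    unfolding ac_def by (simp add: power2_eq_square)
  finally show ?thesis .
qed

lemma ac0: assumes "k \<le> d" shows "ac d k 0 = 1"
proof -
  have "d choose (d-k) = d choose k" using binomial_symmetric[OF assms] by simp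
  moreover have "d choose k > 0" using assms by simp
  ultimately show ?thesis unfolding ac_def by simp
qed

lemma ac_nonneg: "ac d k j \<ge> 0" unfolding ac_def by simp

lemma ac_out: "ac d k (Suc k) = 0" unfolding ac_def by simp

lemma key_real:
  fixes D K J :: real
  assumes "1 \<le> J" "J \<le> K" "K < D" "1 \<le> 2*K - D"
  shows "D * (K - J) * ((2*K - D) - J) \<le> K * ((2*K - D) - 1) * (D - J)"
proof (cases "J \<le> 2*K - D")
  case True
  have a: "D * (K - J) \<le> K * (D - J)" using assms by (simp add: algebra_simps mult_left_mono)
  have b: "(2*K - D) - J \<le> (2*K - D) - 1" using assms by simp
  have "D * (K - J) * ((2*K - D) - J) \<le> K * (D - J) * ((2*K - D) - 1)"
    using mult_mono[OF a b] True assms by simp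
  then show ?thesis by (simp add: algebra_simps)
next
  case False
  have "D * (K - J) * ((2*K - D) - J) \<le> 0"
    using False assms by (intro mult_nonneg_nonpos) auto
  moreover have "0 \<le> K * ((2*K - D) - 1) * (D - J)" using assms by simp
  ultimately show ?thesis by linarith
qed

lemma term_bound:
  fixes y :: real
  assumes "j \<le> k" "k < d" "1 \<le> 2*real k - real d" "0 \<le> y"
  shows "((real j - real k) * ac d k j + 2 * real (Suc j) * ac d k (Suc j)) * y^j
     \<le> real k / real d * (2*real k - real d - 1) * ac d k j * y^j + (if j = 0 then real k / real d else 0)"
proof (cases "j = 0")
  case True
  have r: "ac d k 1 * real d = real k ^ 2" using ac_ratio[of 0 k d] assms ac0[of k d] by simp
  have dpos: "real d > 0" using assms by simp
  have "ac d k 1 = real k ^ 2 / real d" using r dpos by (simp add: field_simps)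
  then show ?thesis using True ac0[of k d] assms dpos by (simp add: field_simps power2_eq_square)
next
  case False
  define A where "A = ac d k j"
  define n where "n = 2*real k - real d"
  have A0: "A \<ge> 0" unfolding A_def by (rule ac_nonneg)
  have dj: "real d - real j > 0" using assms by simp
  have dpos: "real d > 0" using assms by simp
  have rat: "real (Suc j) * ac d k (Suc j) * (real d - real j) = A * (real k - real j)^2"
    using ac_ratio[of j k d] assms unfolding A_def by simp
  define c where "c = (real j - real k) * A + 2 * real (Suc j) * ac d k (Suc j)"
  have "c * (real d - real j) = A * ((real k - real j) * (n - real j))"
    unfolding c_def n_def using rat by (simp add: algebra_simps power2_eq_square)
  have kr: "real d * (real k - real j) * (n - real j) \<le> real k * (n - 1) * (real d - real j)"
    unfolding n_def using key_real[of "real j" "real k" "real d"] assms False by simp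
  have "real d * (c * (real d - real j)) \<le> A * (real k * (n - 1) * (real d - real j))"
  proof -
    have "real d * (c * (real d - real j)) = A * (real d * (real k - real j) * (n - real j))"
      using \<open>c * (real d - real j) = _\<close> by simp
    also have "\<dots> \<le> A * (real k * (n - 1) * (real d - real j))"
      using mult_left_mono[OF kr A0] .
    finally show ?thesis .
  qed
  then have "(real d * c) * (real d - real j) \<le> (A * real k * (n - 1)) * (real d - real j)"
    by (simp add: algebra_simps)
  then have "real d * c \<le> A * real k * (n - 1)" using dj by simp
  then have "c \<le> real k / real d * (n - 1) * A" using dpos by (simp add: field_simps)
  then have "c * y^j \<le> real k / real d * (n - 1) * A * y^j"
    using assms mult_right_mono[of c "real k / real d * (n - 1) * A" "y^j"] by simp
  then show ?thesis using False unfolding c_def A_def n_def by simp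
qed

lemma deriv_f18:
  assumes "k \<le> d"
  shows "deriv (f18 d k) x = (\<Sum>j=0..k. ac d k j * (real j * (x-1)^(j-1)))"
proof -
  have e: "f18 d k = (\<lambda>x. \<Sum>j=0..k. ac d k j * (x-1)^j)"
    using f18_expand[OF assms] by (intro ext) simp
  have "((\<lambda>x. \<Sum>j=0..k. ac d k j * (x-1)^j) has_real_derivative (\<Sum>j=0..k. ac d k j * (real j * (x-1)^(j-1)))) (at x)"
    by (auto intro!: derivative_eq_intros sum.cong simp: mult_ac)
  then show ?thesis unfolding e by (rule DERIV_imp_deriv)
qed

lemma sum_bound:
  fixes y :: real
  assumes "k < d" "1 \<le> 2*real k - real d" "0 \<le> y"
  shows "(y + 2) * (\<Sum>j=0..k. ac d k j * (real j * y^(j-1))) - real k * (\<Sum>j=0..k. ac d k j * y^j)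
     \<le> real k / real d * ((2*real k - real d - 1) * (\<Sum>j=0..k. ac d k j * y^j) + 1)"
proof -
  define g where "g j = 2 * real j * ac d k j * y^(j-1)" for j
  have S1: "(y + 2) * (\<Sum>j=0..k. ac d k j * (real j * y^(j-1)))
      = (\<Sum>j=0..k. real j * ac d k j * y^j) + (\<Sum>j=0..k. g j)"
    unfolding sum_distrib_left sum.distrib[symmetric]
  proof (rule sum.cong[OF refl])
    fix j
    show "(y + 2) * (ac d k j * (real j * y ^ (j - 1))) = real j * ac d k j * y ^ j + g j"
    proof (cases j)
      case 0 then show ?thesis unfolding g_def by simp
    next
      case (Suc i) then show ?thesis unfolding g_def by (simp add: algebra_simps)
    qed
  qed
  have S2: "(\<Sum>j=0..k. g j) = (\<Sum>j=0..k. 2 * real (Suc j) * ac d k (Suc j) * y^j)"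
  proof -
    have "(\<Sum>j=0..Suc k. g j) = g 0 + (\<Sum>j=0..k. g (Suc j))"
      unfolding sum.atLeast0_atMost_Suc_shift comp_def ..
    moreover have "(\<Sum>j=0..Suc k. g j) = (\<Sum>j=0..k. g j) + g (Suc k)"
      by simp
    moreover have "g 0 = 0" "g (Suc k) = 0" unfolding g_def by (simp_all add: ac_out)
    ultimately have "(\<Sum>j=0..k. g j) = (\<Sum>j=0..k. g (Suc j))" by simp
    then show ?thesis unfolding g_def by simp
  qed
  have "(y + 2) * (\<Sum>j=0..k. ac d k j * (real j * y^(j-1))) - real k * (\<Sum>j=0..k. ac d k j * y^j)
      = (\<Sum>j=0..k. ((real j - real k) * ac d k j + 2 * real (Suc j) * ac d k (Suc j)) * y^j)"
    apply (subst S1, subst S2)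
    unfolding sum_distrib_left sum.distrib[symmetric] sum_subtractf[symmetric]
    by (rule sum.cong[OF refl]) (simp add: algebra_simps)
  also have "\<dots> \<le> (\<Sum>j=0..k. real k / real d * (2*real k - real d - 1) * ac d k j * y^j + (if j = 0 then real k / real d else 0))"
    by (rule sum_mono) (rule term_bound, use assms in auto)
  also have "\<dots> = real k / real d * ((2*real k - real d - 1) * (\<Sum>j=0..k. ac d k j * y^j) + 1)"
  proof -
    have "(\<Sum>j=0..k. real k / real d * (2*real k - real d - 1) * ac d k j * y^j + (if j = 0 then real k / real d else 0))
        = (\<Sum>j=0..k. (real k / real d * (2*real k - real d - 1)) * (ac d k j * y^j)) + (\<Sum>j=0..k. (if j = 0 then real k / real d else 0))"
      unfolding sum.distrib by (simp add: mult.assoc)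
    also have "\<dots> = (real k / real d * (2*real k - real d - 1)) * (\<Sum>j=0..k. ac d k j * y^j) + real k / real d"
      by (simp add: sum_distrib_left)
    also have "\<dots> = real k / real d * ((2*real k - real d - 1) * (\<Sum>j=0..k. ac d k j * y^j) + 1)"
      by (simp add: ring_distribs)
    finally show ?thesis .
  qed
  finally show ?thesis .
qed

lemma final_alg:
  fixes D K f P :: real
  assumes D: "D > 0" and K: "K > 0" and n1: "1 \<le> 2*K - D" and k3: "3*K \<le> 2*D"
    and f1: "f > 1" and fb: "f \<le> K / (2*K - D)^2"
    and P: "P - K * f \<le> K / D * ((2*K - D - 1) * f + 1)"
  shows "P / K < (1 + (2*K - D) / ((D - K) + sqrt ((D - K)^2 + D * (2*K - D) * f))) * f"
proof -
  define n where "n = 2*K - D"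
  define m where "m = D - K"
  define S where "S = sqrt (m^2 + D * n * f)"
  define Q where "Q = (n - 1) * f + 1"
  have m0: "m > 0" unfolding m_def using k3 K by simp
  have n0: "n \<ge> 1" unfolding n_def using n1 by simp
  have "D * n * f \<ge> 0" using n0 D f1 by simp
  moreover have "m^2 \<ge> 0" by simp
  ultimately have rad: "m^2 + D * n * f \<ge> 0" by linarith
  have S2: "S^2 = m^2 + D * n * f" unfolding S_def using rad by simp
  have S0: "S \<ge> 0" unfolding S_def using rad by simp
  have Q0: "Q \<ge> 0" unfolding Q_def using n0 f1 by simp
  have "(n-1)^2 * f \<le> (n-1)^2 * (K / n^2)"
    using fb unfolding n_def by (intro mult_left_mono) auto
  also have "\<dots> < K"
  proof -
    have "(n-1)^2 < n^2" using n0 by (simp add: power2_eq_square algebra_simps)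
    then have "(n-1)^2 / n^2 < 1" using n0 by simp
    then have "K * ((n-1)^2 / n^2) < K * 1" using K by (intro mult_strict_left_mono) auto
    then show ?thesis by (simp add: mult.commute)
  qed
  also have "K \<le> 2*m" unfolding m_def using k3 by simp
  finally have key: "(n-1)^2 * f < 2*m + 1" by simp
  have "(Q + m)^2 - S^2 = (f - 1) * ((n-1)^2 * f - 1 - 2*m)"
    unfolding S2 Q_def D m_def n_def by (simp add: power2_eq_square algebra_simps)
  also have "\<dots> < 0" using f1 key by (intro mult_pos_neg) auto
  finally have "(Q + m)^2 < m^2 + D * n * f" using S2 by simp
  then have QS: "Q + m < S" unfolding S_def by (rule real_less_rsqrt)
  have mS: "m + S > 0" using m0 S0 by simp
  have eta: "n / (m + S) * f = (S - m) / D"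
  proof -
    have "(S - m) * (m + S) = D * n * f" using S2 by (simp add: power2_eq_square algebra_simps)
    then show ?thesis using mS D by (simp add: field_simps)
  qed
  have "P / K \<le> f + Q / D"
  proof -
    have e: "K * (f + Q / D) = K * f + K / D * Q" by (simp add: ring_distribs)
    have "Q = (2*K - D - 1) * f + 1" unfolding Q_def n_def by simp
    then have "K / D * Q = K / D * ((2*K - D - 1) * f + 1)" by simp
    then have "P \<le> K * (f + Q / D)" using P e by linarith
    then show ?thesis using K by (simp add: field_simps)
  qed
  also have "\<dots> < f + (S - m) / D" using QS D by (simp add: divide_strict_right_mono)
  also have "\<dots> = (1 + n / (m + S)) * f" using eta by (simp add: algebra_simps)
  finally show ?thesis unfolding n_def m_def S_def by simp
qed

lemma F_gt1:
  fixes y :: real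
  assumes "1 \<le> k" "k < d" "y > 0"
  shows "(\<Sum>j=0..k. ac d k j * y^j) > 1"
proof -
  have r: "ac d k 1 * real d = real k ^ 2" using ac_ratio[of 0 k d] assms ac0[of k d] by simp
  have a1: "ac d k 1 > 0"
  proof -
    have "real k ^ 2 > 0" using assms by simp
    then have "ac d k 1 * real d > 0" using r by simp
    then show ?thesis using assms by (simp add: zero_less_mult_iff)
  qed
  have "(\<Sum>j\<in>{0,1}. ac d k j * y^j) \<le> (\<Sum>j=0..k. ac d k j * y^j)"
    using assms by (intro sum_mono2) (auto intro!: mult_nonneg_nonneg ac_nonneg)
  moreover have "(\<Sum>j\<in>{0,1}. ac d k j * y^j) = 1 + ac d k 1 * y" using ac0[of k d] assms by simp
  moreover have "ac d k 1 * y > 0" using a1 assms by simp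
  ultimately show ?thesis by linarith
qed

theorem lemma18:
  fixes d k :: nat and x :: real
  assumes "d \<ge> 404"
    and "real d / 2 + 1 < real k" and "real k \<le> 2 * real d / 3"
    and "1 < x" and "x \<le> 2"
    and "f18 d k x \<le> real k / (2 * real k - real d)^2"
  shows "(x + 1) * deriv (f18 d k) x / real k < (1 + eta18 d k x) * f18 d k x"
proof -
  define y where "y = x - 1"
  have y0: "y > 0" using assms unfolding y_def by simp
  have kd: "k < d" using assms by simp
  have k1: "1 \<le> k" using assms by simp
  have n1: "1 \<le> 2 * real k - real d" using assms by simp
  have F: "f18 d k x = (\<Sum>j=0..k. ac d k j * y^j)" unfolding y_def using f18_expand kd by simp
  have Dv: "deriv (f18 d k) x = (\<Sum>j=0..k. ac d k j * (real j * y^(j-1)))"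
    unfolding y_def using deriv_f18 kd by simp
  have x1: "x + 1 = y + 2" unfolding y_def by simp
  have P: "(x + 1) * deriv (f18 d k) x - real k * f18 d k x
     \<le> real k / real d * ((2*real k - real d - 1) * f18 d k x + 1)"
    unfolding x1 F Dv using sum_bound[of k d y] kd n1 y0 by simp
  have f1: "f18 d k x > 1" unfolding F using F_gt1 k1 kd y0 by simp
  have "(x + 1) * deriv (f18 d k) x / real k < (1 + (2*real k - real d) / ((real d - real k) + sqrt ((real d - real k)^2 + real d * (2*real k - real d) * f18 d k x))) * f18 d k x"
    using final_alg[of "real d" "real k" "f18 d k x" "(x + 1) * deriv (f18 d k) x"] assms kd k1 n1 f1 P by simp
  then show ?thesis unfolding eta18_def by simp
qed

end
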